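(* Let $p=(p_i)_{i\in\mathbb{N}}$ be a cookie environment with $p_i\in[\frac12,1)$ for all $i$, and suppose $\delta=\sum_{i=1}^\infty(2p_i-1)<\infty$. Let $\rho(x)=\mathbb{E}[U_p(x)]-x$. Then $\lim_{x\to\infty}\rho(x)=\delta$, and furthermore $\rho(x)\le\delta$ for all positive integers $x$.
   Context: For a cookie environment $p$, let $B_1,B_2,\dots$ be independent Bernoulli random variables with $\Pr[B_i=1]=p_i$ ($B_i=1$ is a "success", $B_i=0$ a "failure"). For a positive integer $x$, $U_p(x)=\inf\{k\in\mathbb{N}:\sum_{i=1}^k(1-B_i)=x\}-x$, i.e. the number of successes before the $x$-th failure. *)

theory Defs
  imports "HOL-Probability.Probability"
begin

text \<open>Cookie environment p :: nat => real, indexed from 0 (p 0 is the paper's p_1).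
  Outcome space: infinite product of Bernoulli measures; omega i = True means B_i = 1 (success).\<close>

definition cookie_space :: "(nat \<Rightarrow> real) \<Rightarrow> (nat \<Rightarrow> bool) measure" where
  "cookie_space p = (\<Pi>\<^sub>M i\<in>UNIV. measure_pmf (bernoulli_pmf (p i)))"

definition failures :: "(nat \<Rightarrow> bool) \<Rightarrow> nat \<Rightarrow> nat" where
  "failures \<omega> k = card {i. i < k \<and> \<not> \<omega> i}"

text \<open>U_p(x): number of successes before the x-th failure
  (inf {k. failures in first k trials = x} - x).\<close>
definition U :: "nat \<Rightarrow> (nat \<Rightarrow> bool) \<Rightarrow> nat" where
  "U x \<omega> = (LEAST k. failures \<omega> k = x) - x"

definition rho :: "(nat \<Rightarrow> real) \<Rightarrow> nat \<Rightarrow> real" where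
  "rho p x = (\<integral>\<omega>. real (U x \<omega>) \<partial>cookie_space p) - real x"

end

theory Submission
  imports Defs
begin

lemma cs_pps: "product_prob_space (\<lambda>i. measure_pmf (bernoulli_pmf (p i)))"
  by unfold_locales

lemma cs_prob: "prob_space (cookie_space p)"
  unfolding cookie_space_def by (rule prob_space_PiM) (simp add: prob_space_measure_pmf)

lemma space_cs[simp]: "space (cookie_space p) = UNIV"
  unfolding cookie_space_def by (auto simp: space_PiM)

lemma comp_meas[measurable]: "(\<lambda>\<omega>. \<omega> i) \<in> measurable (cookie_space p) (count_space UNIV)"
proof -
  have "(\<lambda>\<omega>. \<omega> i) \<in> measurable (cookie_space p) (measure_pmf (bernoulli_pmf (p i)))"
    unfolding cookie_space_def by (rule measurable_component_singleton) simp
  then show ?thesis by (simp add: measurable_cong_sets)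
qed

lemma failures_sum: "failures \<omega> k = (\<Sum>i<k. if \<omega> i then 0 else 1)"
  unfolding failures_def by (simp add: sum.If_cases Int_def lessThan_def conj_commute)

lemma failures_meas[measurable]: "(\<lambda>\<omega>. failures \<omega> k) \<in> measurable (cookie_space p) (count_space UNIV)"
  unfolding failures_sum by measurable

lemma U_meas[measurable]: "(\<lambda>\<omega>. U x \<omega>) \<in> measurable (cookie_space p) (count_space UNIV)"
  unfolding U_def by measurable

lemma sets_C[measurable]: "{\<omega>. \<forall>i\<in>J. \<omega> i = s i} \<in> sets (cookie_space p)" if "finite J"
proof -
  have "{\<omega>\<in>space (cookie_space p). \<forall>i\<in>J. \<omega> i = s i} \<in> sets (cookie_space p)"
    using that by measurable
  then show ?thesis by simp
qed

lemma emeasure_cyl: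
  assumes "finite J"
  shows "emeasure (cookie_space p) {\<omega>. \<forall>i\<in>J. \<omega> i = s i}
     = (\<Prod>i\<in>J. emeasure (measure_pmf (bernoulli_pmf (p i))) {s i})"
proof -
  interpret product_prob_space "\<lambda>i. measure_pmf (bernoulli_pmf (p i))" UNIV by (rule cs_pps)
  have "emeasure (cookie_space p) {x\<in>space (cookie_space p). \<forall>i\<in>J. x i \<in> {s i}}
     = (\<Prod>i\<in>J. emeasure (measure_pmf (bernoulli_pmf (p i))) {s i})"
    unfolding cookie_space_def by (rule emeasure_PiM_Collect) (use assms in auto)
  then show ?thesis by simp
qed

lemma sum_cyl:
  fixes h :: "(nat \<Rightarrow> bool) \<Rightarrow> ennreal"
  assumes h: "\<And>\<omega> \<omega>'. (\<forall>i<k. \<omega> i = \<omega>' i) \<Longrightarrow> h \<omega> = h \<omega>'"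
  shows "h \<omega> = (\<Sum>s\<in>PiE {..<k} (\<lambda>_. UNIV::bool set). h s * indicator {\<omega>. \<forall>i\<in>{..<k}. \<omega> i = s i} \<omega>)"
proof -
  let ?s0 = "restrict \<omega> {..<k}"
  have "(\<Sum>s\<in>PiE {..<k} (\<lambda>_. UNIV::bool set). h s * indicator {\<omega>. \<forall>i\<in>{..<k}. \<omega> i = s i} \<omega>)
      = (\<Sum>s\<in>PiE {..<k} (\<lambda>_. UNIV::bool set). if s = ?s0 then h \<omega> else 0)"
  proof (rule sum.cong[OF refl])
    fix s assume s: "s \<in> PiE {..<k} (\<lambda>_. UNIV::bool set)"
    show "h s * indicator {\<omega>. \<forall>i\<in>{..<k}. \<omega> i = s i} \<omega> = (if s = ?s0 then h \<omega> else 0)"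
    proof (cases "s = ?s0")
      case True
      have m: "\<omega> \<in> {\<omega>. \<forall>i\<in>{..<k}. \<omega> i = s i}" using True by simp
      have hs: "h s = h \<omega>" by (rule h) (simp add: True)
      show ?thesis using m hs True by simp
    next
      case False
      then obtain i where i: "s i \<noteq> restrict \<omega> {..<k} i" by (auto simp: fun_eq_iff)
      have "i < k" using i s by (cases "i < k") (auto simp: PiE_def extensional_def)
      then have "\<not> (\<forall>i\<in>{..<k}. \<omega> i = s i)" using i by auto
      then show ?thesis using False by (simp add: indicator_def)
    qed
  qed
  also have "\<dots> = h \<omega>"
    by (subst sum.delta) (auto simp: finite_PiE)
  finally show ?thesis by simp
qed

lemma indep_step:
  fixes h :: "(nat \<Rightarrow> bool) \<Rightarrow> ennreal"
  assumes h: "\<And>\<omega> \<omega>'. (\<forall>i<k. \<omega> i = \<omega>' i) \<Longrightarrow> h \<omega> = h \<omega>'"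
  shows "(\<integral>\<^sup>+\<omega>. indicator {\<omega>. \<omega> k = b} \<omega> * h \<omega> \<partial>cookie_space p)
     = emeasure (measure_pmf (bernoulli_pmf (p k))) {b} * (\<integral>\<^sup>+\<omega>. h \<omega> \<partial>cookie_space p)"
proof -
  let ?S = "PiE {..<k} (\<lambda>_. UNIV::bool set)"
  let ?C = "\<lambda>s. {\<omega>. \<forall>i\<in>{..<k}. \<omega> i = s i}"
  let ?D = "\<lambda>s. {\<omega>. \<forall>i\<in>insert k {..<k}. \<omega> i = (s(k:=b)) i}"
  let ?e = "\<lambda>i c. emeasure (measure_pmf (bernoulli_pmf (p i))) {c}"
  have fin: "finite ?S" by (simp add: finite_PiE)
  have 1: "(\<integral>\<^sup>+\<omega>. h \<omega> \<partial>cookie_space p) = (\<Sum>s\<in>?S. h s * emeasure (cookie_space p) (?C s))"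
  proof -
    have "(\<integral>\<^sup>+\<omega>. h \<omega> \<partial>cookie_space p) = (\<integral>\<^sup>+\<omega>. (\<Sum>s\<in>?S. h s * indicator (?C s) \<omega>) \<partial>cookie_space p)"
      by (rule nn_integral_cong) (rule sum_cyl[OF h])
    also have "\<dots> = (\<Sum>s\<in>?S. (\<integral>\<^sup>+\<omega>. h s * indicator (?C s) \<omega> \<partial>cookie_space p))"
      by (rule nn_integral_sum) (simp add: fin)
    also have "\<dots> = (\<Sum>s\<in>?S. h s * emeasure (cookie_space p) (?C s))"
      by (intro sum.cong refl nn_integral_cmult_indicator sets_C) simp_all
    finally show ?thesis .
  qed
  have 2: "(\<integral>\<^sup>+\<omega>. indicator {\<omega>. \<omega> k = b} \<omega> * h \<omega> \<partial>cookie_space p) = (\<Sum>s\<in>?S. h s * emeasure (cookie_space p) (?D s))"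
  proof -
    have "(\<integral>\<^sup>+\<omega>. indicator {\<omega>. \<omega> k = b} \<omega> * h \<omega> \<partial>cookie_space p) = (\<integral>\<^sup>+\<omega>. (\<Sum>s\<in>?S. h s * indicator (?D s) \<omega>) \<partial>cookie_space p)"
    proof (rule nn_integral_cong)
      fix \<omega> :: "nat \<Rightarrow> bool"
      have "indicator {\<omega>. \<omega> k = b} \<omega> * h \<omega> = (\<Sum>s\<in>?S. indicator {\<omega>. \<omega> k = b} \<omega> * (h s * indicator (?C s) \<omega>))"
        unfolding sum_distrib_left[symmetric] by (rule arg_cong[OF sum_cyl[OF h]])
      also have "\<dots> = (\<Sum>s\<in>?S. h s * indicator (?D s) \<omega>)"
        by (intro sum.cong refl) (auto simp: indicator_def)
      finally show "indicator {\<omega>. \<omega> k = b} \<omega> * h \<omega> = (\<Sum>s\<in>?S. h s * indicator (?D s) \<omega>)" .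
    qed
    also have "\<dots> = (\<Sum>s\<in>?S. (\<integral>\<^sup>+\<omega>. h s * indicator (?D s) \<omega> \<partial>cookie_space p))"
      by (rule nn_integral_sum) (simp add: fin)
    also have "\<dots> = (\<Sum>s\<in>?S. h s * emeasure (cookie_space p) (?D s))"
      by (intro sum.cong refl nn_integral_cmult_indicator sets_C) simp_all
    finally show ?thesis .
  qed
  have 3: "emeasure (cookie_space p) (?D s) = ?e k b * emeasure (cookie_space p) (?C s)" for s
  proof -
    have "emeasure (cookie_space p) (?D s) = (\<Prod>i\<in>insert k {..<k}. ?e i ((s(k:=b)) i))"
      by (rule emeasure_cyl) simp
    also have "\<dots> = ?e k b * (\<Prod>i\<in>{..<k}. ?e i ((s(k:=b)) i))"
      by (subst prod.insert) auto
    also have "(\<Prod>i\<in>{..<k}. ?e i ((s(k:=b)) i)) = (\<Prod>i\<in>{..<k}. ?e i (s i))"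
      by (intro prod.cong) auto
    also have "\<dots> = emeasure (cookie_space p) (?C s)"
      by (rule emeasure_cyl[symmetric]) simp
    finally show ?thesis .
  qed
  show ?thesis unfolding 1 2 3 by (simp add: sum_distrib_left mult_ac)
qed

lemma F_Suc: "failures \<omega> (Suc k) = failures \<omega> k + (if \<omega> k then 0 else 1)"
  unfolding failures_sum by simp

lemma F_mono: "j \<le> k \<Longrightarrow> failures \<omega> j \<le> failures \<omega> k"
  unfolding failures_def by (rule card_mono) auto

lemma F_le: "failures \<omega> k \<le> k"
  unfolding failures_def using card_mono[of "{..<k}" "{i. i < k \<and> \<not> \<omega> i}"] by auto

lemma F_ivt: "x \<le> failures \<omega> k \<Longrightarrow> \<exists>j\<le>k. failures \<omega> j = x"
proof (induction k)
  case 0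
  then show ?case by (simp add: failures_def)
next
  case (Suc k)
  show ?case
  proof (cases "x \<le> failures \<omega> k")
    case True
    then show ?thesis using Suc.IH by (meson le_SucI)
  next
    case False
    then have "failures \<omega> (Suc k) = x" using Suc.prems F_Suc[of \<omega> k] by (auto split: if_splits)
    then show ?thesis by auto
  qed
qed

lemma F_unb:
  assumes "\<forall>n. \<exists>i\<ge>n. \<not> \<omega> i"
  shows "\<exists>k. x \<le> failures \<omega> k"
proof (induction x)
  case 0 then show ?case by simp
next
  case (Suc x)
  then obtain k where k: "x \<le> failures \<omega> k" by auto
  obtain i where i: "i \<ge> k" "\<not> \<omega> i" using assms by auto
  have "failures \<omega> k \<le> failures \<omega> i" using i F_mono by auto
  then have "Suc x \<le> failures \<omega> (Suc i)" using k i F_Suc[of \<omega> i] by simp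
  then show ?case by blast
qed

lemma F_ex:
  assumes "\<forall>n. \<exists>i\<ge>n. \<not> \<omega> i"
  shows "\<exists>k. failures \<omega> k = x"
  using F_unb[OF assms, of x] F_ivt by blast

lemma F_lt_iff:
  assumes ex: "\<exists>k. failures \<omega> k = x"
  shows "failures \<omega> k < x \<longleftrightarrow> k < (LEAST k. failures \<omega> k = x)"
proof -
  let ?T = "LEAST k. failures \<omega> k = x"
  have T: "failures \<omega> ?T = x" using LeastI_ex[OF ex] .
  show ?thesis
  proof
    assume a: "failures \<omega> k < x"
    show "k < ?T"
    proof (rule ccontr)
      assume "\<not> k < ?T"
      then have "failures \<omega> ?T \<le> failures \<omega> k" using F_mono by auto
      then show False using a T by simp
    qed
  next
    assume a: "k < ?T"
    show "failures \<omega> k < x"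
    proof (rule ccontr)
      assume "\<not> failures \<omega> k < x"
      then obtain j where "j \<le> k" "failures \<omega> j = x" using F_ivt[of x \<omega> k] by auto
      then have "?T \<le> j" by (simp add: Least_le)
      then show False using a \<open>j \<le> k\<close> by simp
    qed
  qed
qed

lemma U_sum:
  assumes inf: "\<forall>n. \<exists>i\<ge>n. \<not> \<omega> i"
  shows "ennreal (real (U x \<omega>)) = (\<Sum>k. indicator {\<omega>. \<omega> k = True} \<omega> * indicator {\<omega>. failures \<omega> k < x} \<omega>)"
    and "ennreal (real x) = (\<Sum>k. indicator {\<omega>. \<omega> k = False} \<omega> * indicator {\<omega>. failures \<omega> k < x} \<omega>)"
proof -
  let ?T = "LEAST k. failures \<omega> k = x"
  have ex: "\<exists>k. failures \<omega> k = x" by (rule F_ex[OF inf])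
  have T: "failures \<omega> ?T = x" using LeastI_ex[OF ex] .
  have lt: "failures \<omega> k < x \<longleftrightarrow> k < ?T" for k using F_lt_iff[OF ex] .
  have S: "(\<Sum>k<?T. (if \<omega> k then 1 else 0::nat)) + failures \<omega> ?T = ?T"
    unfolding failures_sum sum.distrib[symmetric] by (simp add: if_distrib cong: if_cong)
  have "(\<Sum>k. indicator {\<omega>. \<omega> k = True} \<omega> * indicator {\<omega>. failures \<omega> k < x} \<omega> :: ennreal)
     = (\<Sum>k<?T. indicator {\<omega>. \<omega> k = True} \<omega> * indicator {\<omega>. failures \<omega> k < x} \<omega>)"
    by (rule suminf_finite) (auto simp: lt)
  also have "\<dots> = (\<Sum>k<?T. of_nat (if \<omega> k then 1 else 0::nat))"
    by (intro sum.cong refl) (auto simp: lt indicator_def)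
  also have "\<dots> = of_nat (\<Sum>k<?T. (if \<omega> k then 1 else 0::nat))"
    by simp
  also have "(\<Sum>k<?T. (if \<omega> k then 1 else 0::nat)) = U x \<omega>"
    unfolding U_def using S T by simp
  finally show "ennreal (real (U x \<omega>)) = (\<Sum>k. indicator {\<omega>. \<omega> k = True} \<omega> * indicator {\<omega>. failures \<omega> k < x} \<omega>)"
    by (simp add: ennreal_of_nat_eq_real_of_nat)
  have "(\<Sum>k. indicator {\<omega>. \<omega> k = False} \<omega> * indicator {\<omega>. failures \<omega> k < x} \<omega> :: ennreal)
     = (\<Sum>k<?T. indicator {\<omega>. \<omega> k = False} \<omega> * indicator {\<omega>. failures \<omega> k < x} \<omega>)"
    by (rule suminf_finite) (auto simp: lt)
  also have "\<dots> = (\<Sum>k<?T. of_nat (if \<omega> k then 0 else 1::nat))"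
    by (intro sum.cong refl) (auto simp: lt indicator_def)
  also have "\<dots> = of_nat (failures \<omega> ?T)"
    unfolding failures_sum by simp
  finally show "ennreal (real x) = (\<Sum>k. indicator {\<omega>. \<omega> k = False} \<omega> * indicator {\<omega>. failures \<omega> k < x} \<omega>)"
    using T by (simp add: ennreal_of_nat_eq_real_of_nat)
qed

lemma ae_inf:
  assumes p01: "\<And>i. 0 \<le> p i \<and> p i \<le> 1" and ev: "eventually (\<lambda>i. p i \<le> 3/4) sequentially"
  shows "AE \<omega> in cookie_space p. \<forall>n. \<exists>i\<ge>n. \<not> \<omega> i"
proof -
  interpret prob_space "cookie_space p" by (rule cs_prob)
  obtain N where N: "\<And>i. i \<ge> N \<Longrightarrow> p i \<le> 3/4" using ev by (auto simp: eventually_sequentially)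
  have "AE \<omega> in cookie_space p. \<exists>i\<ge>n. \<not> \<omega> i" for n
  proof -
    define n' where "n' = max n N"
    define B where "B m = {\<omega>. \<forall>i\<in>{n'..<n'+m}. \<omega> i = True}" for m
    define Z where "Z = (\<Inter>m. B m)"
    have Bs: "B m \<in> sets (cookie_space p)" for m unfolding B_def by (rule sets_C) simp
    have Zs: "Z \<in> sets (cookie_space p)" unfolding Z_def using Bs by auto
    have "measure (cookie_space p) Z \<le> (3/4)^m" for m
    proof -
      have "emeasure (cookie_space p) Z \<le> emeasure (cookie_space p) (B m)"
        unfolding Z_def by (rule emeasure_mono) (use Bs in auto)
      also have "\<dots> = (\<Prod>i\<in>{n'..<n'+m}. emeasure (measure_pmf (bernoulli_pmf (p i))) {True})"
        unfolding B_def by (rule emeasure_cyl) simp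
      also have "\<dots> = (\<Prod>i\<in>{n'..<n'+m}. ennreal (p i))"
        using p01 by (simp add: emeasure_pmf_single)
      also have "\<dots> = ennreal (\<Prod>i\<in>{n'..<n'+m}. p i)"
        using p01 by (simp add: prod_ennreal)
      also have "\<dots> \<le> ennreal ((3/4::real)^m)"
      proof (rule ennreal_leI)
        have "(\<Prod>i\<in>{n'..<n'+m}. p i) \<le> (\<Prod>i\<in>{n'..<n'+m}. 3/4)"
          by (rule prod_mono) (use p01 N in \<open>auto simp: n'_def\<close>)
        then show "(\<Prod>i\<in>{n'..<n'+m}. p i) \<le> (3/4::real)^m" by simp
      qed
      finally have "emeasure (cookie_space p) Z \<le> ennreal ((3/4)^m)" by simp
      then show ?thesis by (simp add: emeasure_eq_measure)
    qed
    moreover have "(\<lambda>m. (3/4::real)^m) \<longlonglongrightarrow> 0" by (rule LIMSEQ_realpow_zero) auto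
    ultimately have "measure (cookie_space p) Z \<le> 0"
      by (intro LIMSEQ_le_const[of "\<lambda>m. (3/4::real)^m" 0]) auto
    then have "Z \<in> null_sets (cookie_space p)"
      using Zs by (simp add: emeasure_eq_measure null_sets_def measure_nonneg antisym)
    moreover have "{\<omega>\<in>space (cookie_space p). \<not> (\<exists>i\<ge>n. \<not> \<omega> i)} \<subseteq> Z"
      by (auto simp: Z_def B_def n'_def)
    ultimately show ?thesis by (rule AE_I')
  qed
  then show ?thesis by (simp add: AE_all_countable)
qed

lemma F_cong: "(\<forall>i<k. \<omega> i = \<omega>' i) \<Longrightarrow> failures \<omega> k = failures \<omega>' k"
  unfolding failures_sum by (intro sum.cong) auto

lemma setF[measurable]: "{\<omega>. failures \<omega> k < x} \<in> sets (cookie_space p)"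
proof -
  have "{\<omega>\<in>space (cookie_space p). failures \<omega> k < x} \<in> sets (cookie_space p)" by measurable
  then show ?thesis by simp
qed

lemma setB[measurable]: "{\<omega>. \<omega> k = b} \<in> sets (cookie_space p)"
proof -
  have "{\<omega>\<in>space (cookie_space p). \<omega> k = b} \<in> sets (cookie_space p)" by measurable
  then show ?thesis by simp
qed

lemma exp_step:
  "(\<integral>\<^sup>+\<omega>. (\<Sum>k. indicator {\<omega>. \<omega> k = b} \<omega> * indicator {\<omega>. failures \<omega> k < x} \<omega>) \<partial>cookie_space p)
   = (\<Sum>k. emeasure (measure_pmf (bernoulli_pmf (p k))) {b} * ennreal (measure (cookie_space p) {\<omega>. failures \<omega> k < x}))"
proof -
  interpret prob_space "cookie_space p" by (rule cs_prob)
  have "(\<integral>\<^sup>+\<omega>. (\<Sum>k. indicator {\<omega>. \<omega> k = b} \<omega> * indicator {\<omega>. failures \<omega> k < x} \<omega>) \<partial>cookie_space p)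
     = (\<Sum>k. (\<integral>\<^sup>+\<omega>. indicator {\<omega>. \<omega> k = b} \<omega> * indicator {\<omega>. failures \<omega> k < x} \<omega> \<partial>cookie_space p))"
    by (rule nn_integral_suminf) simp
  also have "\<dots> = (\<Sum>k. emeasure (measure_pmf (bernoulli_pmf (p k))) {b} * (\<integral>\<^sup>+\<omega>. indicator {\<omega>. failures \<omega> k < x} \<omega> \<partial>cookie_space p))"
  proof (intro suminf_cong indep_step)
    fix k and \<omega> \<omega>' :: "nat \<Rightarrow> bool" assume "\<forall>i<k. \<omega> i = \<omega>' i"
    then show "indicator {\<omega>. failures \<omega> k < x} \<omega> = (indicator {\<omega>. failures \<omega> k < x} \<omega>' :: ennreal)"
      using F_cong[of k \<omega> \<omega>'] by (simp add: indicator_def)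
  qed
  also have "\<dots> = (\<Sum>k. emeasure (measure_pmf (bernoulli_pmf (p k))) {b} * ennreal (measure (cookie_space p) {\<omega>. failures \<omega> k < x}))"
    by (intro suminf_cong) (simp add: emeasure_eq_measure)
  finally show ?thesis .
qed

lemma exp_formulas:
  assumes p01: "\<And>i. 0 \<le> p i \<and> p i \<le> 1" and ev: "eventually (\<lambda>i. p i \<le> 3/4) sequentially"
  shows "(\<integral>\<^sup>+\<omega>. ennreal (real (U x \<omega>)) \<partial>cookie_space p)
           = (\<Sum>k. ennreal (p k * measure (cookie_space p) {\<omega>. failures \<omega> k < x}))"
    and "ennreal (real x) = (\<Sum>k. ennreal ((1 - p k) * measure (cookie_space p) {\<omega>. failures \<omega> k < x}))"
proof -
  interpret prob_space "cookie_space p" by (rule cs_prob)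
  have ae: "AE \<omega> in cookie_space p. \<forall>n. \<exists>i\<ge>n. \<not> \<omega> i" by (rule ae_inf[OF p01 ev])
  have "(\<integral>\<^sup>+\<omega>. ennreal (real (U x \<omega>)) \<partial>cookie_space p)
     = (\<integral>\<^sup>+\<omega>. (\<Sum>k. indicator {\<omega>. \<omega> k = True} \<omega> * indicator {\<omega>. failures \<omega> k < x} \<omega>) \<partial>cookie_space p)"
    by (rule nn_integral_cong_AE) (use ae U_sum(1) in auto)
  also have "\<dots> = (\<Sum>k. ennreal (p k * measure (cookie_space p) {\<omega>. failures \<omega> k < x}))"
    unfolding exp_step using p01 by (intro suminf_cong) (simp add: emeasure_pmf_single ennreal_mult)
  finally show "(\<integral>\<^sup>+\<omega>. ennreal (real (U x \<omega>)) \<partial>cookie_space p)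
           = (\<Sum>k. ennreal (p k * measure (cookie_space p) {\<omega>. failures \<omega> k < x}))" .
  have "ennreal (real x) = (\<integral>\<^sup>+\<omega>. ennreal (real x) \<partial>cookie_space p)"
    using emeasure_space_1 by simp
  also have "\<dots> = (\<integral>\<^sup>+\<omega>. (\<Sum>k. indicator {\<omega>. \<omega> k = False} \<omega> * indicator {\<omega>. failures \<omega> k < x} \<omega>) \<partial>cookie_space p)"
    by (rule nn_integral_cong_AE) (use ae U_sum(2) in auto)
  also have "\<dots> = (\<Sum>k. ennreal ((1 - p k) * measure (cookie_space p) {\<omega>. failures \<omega> k < x}))"
    unfolding exp_step using p01 by (intro suminf_cong) (simp add: emeasure_pmf_single ennreal_mult)
  finally show "ennreal (real x) = (\<Sum>k. ennreal ((1 - p k) * measure (cookie_space p) {\<omega>. failures \<omega> k < x}))" .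
qed

theorem lemma4p1:
  fixes p :: "nat \<Rightarrow> real" and \<delta> :: real
  assumes "\<And>i. 1/2 \<le> p i \<and> p i < 1"
    and "summable (\<lambda>i. 2 * p i - 1)"
    and "\<delta> = (\<Sum>i. 2 * p i - 1)"
  shows "(\<forall>x::nat. x \<ge> 1 \<longrightarrow> integrable (cookie_space p) (\<lambda>\<omega>. real (U x \<omega>)))
     \<and> (rho p \<longlonglongrightarrow> \<delta>)
     \<and> (\<forall>x::nat. x \<ge> 1 \<longrightarrow> rho p x \<le> \<delta>)"
proof -
  interpret prob_space "cookie_space p" by (rule cs_prob)
  note pb = assms(1)
  have p01: "0 \<le> p i \<and> p i \<le> 1" for i using pb[of i] by linarith
  have "(\<lambda>i. 2 * p i - 1) \<longlonglongrightarrow> 0" by (rule summable_LIMSEQ_zero[OF assms(2)])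
  then have "eventually (\<lambda>i. \<bar>2 * p i - 1 - 0\<bar> < 1/2) sequentially"
    using tendstoD[OF \<open>(\<lambda>i. 2 * p i - 1) \<longlonglongrightarrow> 0\<close>, of "1/2"] by (simp add: dist_real_def)
  then have ev: "eventually (\<lambda>i. p i \<le> 3/4) sequentially"
    by (rule eventually_mono) (auto simp: abs_if split: if_splits)
  then obtain N where N: "\<And>i. i \<ge> N \<Longrightarrow> p i \<le> 3/4" by (auto simp: eventually_sequentially)
  define c where "c = Min (insert (1/4) ((\<lambda>i. 1 - p i) ` {..<N}))"
  have cpos: "c > 0" unfolding c_def using pb by (subst Min_gr_iff) auto
  have cle: "c \<le> 1 - p i" for i
  proof (cases "i < N")
    case True then show ?thesis unfolding c_def by (intro Min_le) auto
  next
    case False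
    then have "c \<le> 1/4" unfolding c_def by (intro Min_le) auto
    then show ?thesis using N[of i] False by simp
  qed
  define a where "a x k = measure (cookie_space p) {\<omega>. failures \<omega> k < x}" for x k
  have a01: "0 \<le> a x k" "a x k \<le> 1" for x k unfolding a_def by auto
  have a1: "a x k = 1" if "k < x" for x k
  proof -
    have "{\<omega>. failures \<omega> k < x} = space (cookie_space p)" using F_le[of _ k] that by (auto intro: le_less_trans)
    then show ?thesis unfolding a_def using prob_space by simp
  qed
  define q where "q k = 2 * p k - 1" for k
  have q0: "0 \<le> q k" for k unfolding q_def using pb[of k] by simp
  have main: "integrable (cookie_space p) (\<lambda>\<omega>. real (U x \<omega>)) \<and> rho p x = (\<Sum>k. q k * a x k)" for x
  proof -
    have s1: "summable (\<lambda>k. (1 - p k) * a x k)" and e1: "(\<Sum>k. (1 - p k) * a x k) = real x"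
    proof -
      have E: "ennreal (real x) = (\<Sum>k. ennreal ((1 - p k) * a x k))"
        using exp_formulas(2)[OF p01 ev, of x] unfolding a_def .
      have nn: "\<And>k. 0 \<le> (1 - p k) * a x k" using p01 a01 by simp
      show s: "summable (\<lambda>k. (1 - p k) * a x k)"
        by (rule summable_suminf_not_top[OF nn]) (simp add: E[symmetric])
      show "(\<Sum>k. (1 - p k) * a x k) = real x"
        using E suminf_ennreal2[OF nn s] suminf_nonneg[OF s nn]
        by (metis ennreal_inj of_nat_0_le_iff)
    qed
    have s2: "summable (\<lambda>k. p k * a x k)"
    proof (rule summable_comparison_test'[of "\<lambda>k. (1/c) * ((1 - p k) * a x k)" 0])
      show "summable (\<lambda>k. (1/c) * ((1 - p k) * a x k))" by (rule summable_mult[OF s1])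
      fix k
      have "p k * a x k \<le> 1 * a x k" using p01[of k] a01 by (intro mult_right_mono) auto
      also have "\<dots> \<le> ((1 - p k) / c) * a x k"
        using cle[of k] cpos a01 by (intro mult_right_mono) (auto simp: field_simps)
      finally show "norm (p k * a x k) \<le> (1/c) * ((1 - p k) * a x k)"
        using p01[of k] a01 by simp
    qed
    have nn2: "\<And>k. 0 \<le> p k * a x k" using p01 a01 by simp
    have I: "(\<integral>\<^sup>+\<omega>. ennreal (real (U x \<omega>)) \<partial>cookie_space p) = ennreal (\<Sum>k. p k * a x k)"
      using exp_formulas(1)[OF p01 ev, of x] suminf_ennreal2[OF nn2 s2] unfolding a_def by simp
    have meas: "(\<lambda>\<omega>. real (U x \<omega>)) \<in> borel_measurable (cookie_space p)" by measurable
    have int: "integrable (cookie_space p) (\<lambda>\<omega>. real (U x \<omega>))"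
      by (rule integrableI_nonneg[OF meas]) (auto simp: I)
    have "(\<integral>\<omega>. real (U x \<omega>) \<partial>cookie_space p) = (\<Sum>k. p k * a x k)"
      using integral_eq_nn_integral[OF meas] I by (simp add: suminf_nonneg[OF s2 nn2])
    then have "rho p x = (\<Sum>k. p k * a x k) - (\<Sum>k. (1 - p k) * a x k)"
      unfolding rho_def e1 by simp
    also have "\<dots> = (\<Sum>k. q k * a x k)"
      unfolding suminf_diff[OF s2 s1] q_def by (simp add: algebra_simps)
    finally show ?thesis using int by simp
  qed
  have sq: "summable q" unfolding q_def by (rule assms(2))
  have d: "\<delta> = suminf q" unfolding q_def assms(3) ..
  have sqa: "summable (\<lambda>k. q k * a x k)" for x
    by (rule summable_comparison_test'[OF sq, of 0]) (use q0 a01 in \<open>auto intro: mult_left_le\<close>)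
  have up: "rho p x \<le> \<delta>" for x
    unfolding d main[THEN conjunct2] by (rule suminf_le[OF _ sqa sq]) (use q0 a01 in \<open>auto intro: mult_left_le\<close>)
  have low: "(\<Sum>k<x. q k) \<le> rho p x" for x
  proof -
    have "(\<Sum>k<x. q k) = (\<Sum>k<x. q k * a x k)" by (intro sum.cong) (auto simp: a1)
    also have "\<dots> \<le> (\<Sum>k. q k * a x k)" by (rule sum_le_suminf[OF sqa]) (use q0 a01 in auto)
    finally show ?thesis using main[of x] by simp
  qed
  have lim: "rho p \<longlonglongrightarrow> \<delta>"
  proof (rule tendsto_sandwich[of "\<lambda>x. \<Sum>k<x. q k" _ _ "\<lambda>_. \<delta>"])
    show "eventually (\<lambda>x. (\<Sum>k<x. q k) \<le> rho p x) sequentially" using low by simp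
    show "eventually (\<lambda>x. rho p x \<le> \<delta>) sequentially" using up by simp
    show "(\<lambda>x. \<Sum>k<x. q k) \<longlonglongrightarrow> \<delta>" unfolding d by (rule summable_LIMSEQ[OF sq])
  qed simp
  show ?thesis using main lim up by blast
qed

end
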